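(* Consider the problem $\min_{x\in\mathbb{R}^n} f(x):=F(x)+h(x)$, where $h:\mathbb{R}^n\to\mathbb{R}\cup\{+\infty\}$ is a proper closed convex function, $F:\mathbb{R}^n\to\mathbb{R}$ is lower semicontinuous (possibly nonconvex), $\mathrm{dom}\, f=\mathrm{dom}\, h$, and there is $f_\infty>-\infty$ with $f(x)\ge f_\infty$ for all $x\in\mathrm{dom}\, f$. Fix $q\in[0,2)$ and $\rho>0$. Let $x_0\in\mathrm{dom}\, h$ and let the sequence $(x_k)_{k\ge0}$ be generated by $$x_{k+1}=\mathrm{prox}_{\alpha_k h}\big(x_k-\alpha_k g_k\big),\qquad \mathrm{prox}_{\gamma h}(z):=\arg\min_{y\in\mathrm{dom}\, h}\Big\{h(y)+\tfrac{1}{2\gamma}\|z-y\|^2\Big\},$$ where at each iteration $k$ the vector $g_k$ and numbers $\delta_k\ge 0$, $L_k>0$ satisfy $$F(x)-\big(F(x_k)+\langle g_k,x-x_k\rangle\big)\le \frac{L_k}{2}\|x-x_k\|^2+\delta_k\|x-x_k\|^q\quad\text{for all } x\in\mathrm{dom}\, f,$$ and the step sizes satisfy $0<\alpha_k\le \frac{1}{L_k+q\rho}$. Then for every $j\ge 0$ the vector $p_{j+1}:=-\frac{1}{\alpha_j}(x_{j+1}-x_j)-g_j$ belongs to $\partial h(x_{j+1})$, and for all $k\ge0$, $$\sum_{j=0}^{k}\frac{\alpha_j}{2}\,\|g_j+p_{j+1}\|^2\le f(x_0)-f_\infty+\frac{\sum_{j=0}^{k}(2-q)\,\delta_j^{\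frac{2}{2-q}}}{2\rho^{\frac{q}{2-q}}}.$$
   Context: $\|\cdot\|$ is the Euclidean norm and $\partial h$ the (convex) subdifferential of $h$. The inequality required of $g_k$ says that $F$ is equipped at $x_k$ with an "inexact first-order $(\delta_k,L_k)$-oracle of degree $q$"; the vector $g_k+p_{k+1}$ is called the gradient mapping at iteration $k$. *)

theory Defs
  imports "HOL-Analysis.Analysis" "HOL-Library.Extended_Real"
begin

definition edom :: "('a \<Rightarrow> ereal) \<Rightarrow> 'a set" where
  "edom h = {x. h x < \<infinity>}"

definition proper_fun :: "('a \<Rightarrow> ereal) \<Rightarrow> bool" where
  "proper_fun h \<longleftrightarrow> (\<forall>x. h x \<noteq> -\<infinity>) \<and> (\<exists>x. h x < \<infinity>)"

definition epigraph :: "('a \<Rightarrow> ereal) \<Rightarrow> ('a \<times> real) set" where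
  "epigraph h = {(x, t). h x \<le> ereal t}"

definition convex_fun :: "('a::real_vector \<Rightarrow> ereal) \<Rightarrow> bool" where
  "convex_fun h \<longleftrightarrow> convex (epigraph h)"

definition closed_fun :: "('a::topological_space \<Rightarrow> ereal) \<Rightarrow> bool" where
  "closed_fun h \<longleftrightarrow> closed (epigraph h)"

definition lsc :: "('a::topological_space \<Rightarrow> real) \<Rightarrow> bool" where
  "lsc F \<longleftrightarrow> (\<forall>c. closed {x. F x \<le> c})"

definition subdiff :: "('a::real_inner \<Rightarrow> ereal) \<Rightarrow> 'a \<Rightarrow> 'a set" where
  "subdiff h x = {v. \<forall>y. h y \<ge> h x + ereal (v \<bullet> (y - x))}"

definition prox_set :: "real \<Rightarrow> ('a::real_normed_vector \<Rightarrow> ereal) \<Rightarrow> 'a \<Rightarrow> 'a set" where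
  "prox_set \<gamma> h z = {y \<in> edom h. \<forall>w \<in> edom h.
      h y + ereal (1 / (2 * \<gamma>) * (norm (z - y))\<^sup>2) \<le> h w + ereal (1 / (2 * \<gamma>) * (norm (z - w))\<^sup>2)}"

end

theory Submission imports Defs begin
lemma young_aux:
  fixes q \<rho> \<delta> n :: real
  assumes q: "0 < q" "q < 2" and rho: "\<rho> > 0" and d: "\<delta> \<ge> 0" and n: "n \<ge> 0"
  shows "\<delta> * n powr q \<le> q * \<rho> / 2 * n\<^sup>2 + (2 - q) / 2 * \<delta> powr (2 / (2 - q)) / \<rho> powr (q / (2 - q))"
proof -
  define a where "a = \<rho> powr (q/2) * n powr q"
  define b where "b = \<delta> / \<rho> powr (q/2)"
  have ab: "\<delta> * n powr q = a * b" using rho by (simp add: a_def b_def)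
  have "a * b \<le> a powr (2/q) / (2/q) + b powr (2/(2-q)) / (2/(2-q))"
    apply (rule Youngs_inequality) using q rho d by (auto simp: a_def b_def field_simps)
  moreover have "a powr (2/q) = \<rho> * n\<^sup>2"
    using q rho n by (simp add: a_def powr_mult powr_powr powr_numeral)
  moreover have "b powr (2/(2-q)) = \<delta> powr (2 / (2 - q)) / \<rho> powr (q / (2 - q))"
    using q rho d by (simp add: b_def powr_divide powr_powr)
  ultimately show ?thesis using ab q by (simp add: field_simps)
qed

lemma young_all:
  fixes q \<rho> \<delta> n :: real
  assumes q: "0 \<le> q" "q < 2" and rho: "\<rho> > 0" and d: "\<delta> \<ge> 0" and n: "n \<ge> 0"
  shows "\<delta> * n powr q \<le> q * \<rho> / 2 * n\<^sup>2 + (2 - q) * \<delta> powr (2 / (2 - q)) / (2 * \<rho> powr (q / (2 - q)))"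
proof (cases "q = 0")
  case True
  have "\<delta> * n powr q \<le> \<delta>" using d by (simp add: True)
  then show ?thesis using True d rho by (cases "\<delta> = 0") auto
next
  case False
  then show ?thesis using young_aux[of q \<rho> \<delta> n] assms by (simp add: field_simps)
qed


lemma conv_ineq:
  fixes h :: "'a::real_vector \<Rightarrow> ereal"
  assumes "convex_fun h" "h x = ereal a" "h y = ereal b" "0 \<le> t" "t \<le> 1"
  shows "h ((1 - t) *\<^sub>R x + t *\<^sub>R y) \<le> ereal ((1 - t) * a + t * b)"
proof -
  have "(x, a) \<in> epigraph h" "(y, b) \<in> epigraph h" using assms by (auto simp: epigraph_def)
  then have "(1 - t) *\<^sub>R (x, a) + t *\<^sub>R (y, b) \<in> epigraph h"
    using assms(1,4,5) unfolding convex_fun_def by (intro convexD) auto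
  then show ?thesis by (simp add: epigraph_def)
qed

lemma eps_le:
  fixes a b K :: real
  assumes "\<And>t. 0 < t \<Longrightarrow> t \<le> 1 \<Longrightarrow> a \<le> b + t * K" "K \<ge> 0"
  shows "a \<le> b"
proof (rule ccontr)
  assume "\<not> a \<le> b"
  define t where "t = min 1 ((a - b) / (2 * (K + 1)))"
  have t: "0 < t" "t \<le> 1" using \<open>\<not> a \<le> b\<close> assms(2) by (auto simp: t_def)
  have "t * K \<le> (a - b) / (2 * (K + 1)) * K"
    using assms(2) by (intro mult_right_mono) (auto simp: t_def)
  also have "\<dots> < a - b" using \<open>\<not> a \<le> b\<close> assms(2) proof -
    have "0 < (K + 2) * (a - b)" using \<open>\<not> a \<le> b\<close> assms(2) by simp
    then show ?thesis using assms(2) by (simp add: field_simps)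
  qed
  finally show False using assms(1)[OF t] by linarith
qed

lemma prox_subgrad:
  fixes h :: "'a::real_inner \<Rightarrow> ereal"
  assumes hp: "proper_fun h" and hc: "convex_fun h" and gam: "\<gamma> > 0"
    and y1: "y1 \<in> prox_set \<gamma> h z"
  shows "(1 / \<gamma>) *\<^sub>R (z - y1) \<in> subdiff h y1"
  unfolding subdiff_def
proof (intro CollectI allI)
  fix y
  have y1d: "y1 \<in> edom h" and opt: "\<And>w. w \<in> edom h \<Longrightarrow> h y1 + ereal (1 / (2 * \<gamma>) * (norm (z - y1))\<^sup>2) \<le> h w + ereal (1 / (2 * \<gamma>) * (norm (z - w))\<^sup>2)"
    using y1 by (auto simp: prox_set_def)
  obtain a where a: "h y1 = ereal a" using y1d hp unfolding edom_def proper_fun_def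
    by (cases "h y1") auto
  show "h y1 + ereal ((1 / \<gamma>) *\<^sub>R (z - y1) \<bullet> (y - y1)) \<le> h y"
  proof (cases "y \<in> edom h")
    case False then show ?thesis by (simp add: edom_def)
  next
    case True
    obtain b where b: "h y = ereal b" using True hp unfolding edom_def proper_fun_def
      by (cases "h y") auto
    define d where "d = y - y1"
    define c where "c = 1 / (2 * \<gamma>)"
    have "a + (1 / \<gamma>) * ((z - y1) \<bullet> d) \<le> b + t * (c * (norm d)\<^sup>2)" if t: "0 < t" "t \<le> 1" for t
    proof -
      define yt where "yt = (1 - t) *\<^sub>R y1 + t *\<^sub>R y"
      have yt': "yt = y1 + t *\<^sub>R d" by (simp add: yt_def d_def algebra_simps)
      have hyt: "h yt \<le> ereal ((1 - t) * a + t * b)"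
        unfolding yt_def using conv_ineq[OF hc a b] t by auto
      then have "yt \<in> edom h" by (auto simp: edom_def)
      from opt[OF this] hyt a
      have "a + c * (norm (z - y1))\<^sup>2 \<le> (1 - t) * a + t * b + c * (norm (z - yt))\<^sup>2"
        unfolding c_def by (cases "h yt") auto
      moreover have "(norm (z - yt))\<^sup>2 = (norm (z - y1))\<^sup>2 - 2 * t * ((z - y1) \<bullet> d) + t\<^sup>2 * (norm d)\<^sup>2"
        unfolding yt' power2_norm_eq_inner by (simp add: algebra_simps inner_commute power2_eq_square)
      ultimately have "t * a \<le> t * b - 2 * c * t * ((z - y1) \<bullet> d) + c * t\<^sup>2 * (norm d)\<^sup>2"
        by (simp add: algebra_simps)
      then have "t * (a + 2 * c * ((z - y1) \<bullet> d)) \<le> t * (b + t * (c * (norm d)\<^sup>2))"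
        by (simp add: algebra_simps power2_eq_square)
      then have "a + 2 * c * ((z - y1) \<bullet> d) \<le> b + t * (c * (norm d)\<^sup>2)"
        using t by simp
      then show ?thesis using gam by (simp add: c_def)
    qed
    then have "a + (1 / \<gamma>) * ((z - y1) \<bullet> d) \<le> b"
      by (rule eps_le) (use gam in \<open>auto simp: c_def\<close>)
    then show ?thesis using a b by (simp add: d_def)
  qed
qed
theorem theorem1:
  fixes F :: "'a::euclidean_space \<Rightarrow> real" and h :: "'a \<Rightarrow> ereal"
    and f_inf q \<rho> :: real
    and x g :: "nat \<Rightarrow> 'a" and \<delta> L \<alpha> :: "nat \<Rightarrow> real"
  assumes h_proper: "proper_fun h" and h_closed: "closed_fun h" and h_convex: "convex_fun h"
    and F_lsc: "lsc F"
    and f_lower: "\<forall>y \<in> edom h. ereal (F y) + h y \<ge> ereal f_inf"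
    and q: "0 \<le> q" "q < 2" and rho: "\<rho> > 0"
    and x0: "x 0 \<in> edom h"
    and iter: "\<forall>k. x (Suc k) \<in> prox_set (\<alpha> k) h (x k - \<alpha> k *\<^sub>R g k)"
    and delta: "\<forall>k. \<delta> k \<ge> 0" and Lpos: "\<forall>k. L k > 0"
    and inexact_orc: "\<forall>k. \<forall>y \<in> edom h. F y - (F (x k) + g k \<bullet> (y - x k))
                 \<le> L k / 2 * (norm (y - x k))\<^sup>2 + \<delta> k * norm (y - x k) powr q"
    and step: "\<forall>k. 0 < \<alpha> k \<and> \<alpha> k \<le> 1 / (L k + q * \<rho>)"
  shows "(\<forall>j. - (1 / \<alpha> j) *\<^sub>R (x (Suc j) - x j) - g j \<in> subdiff h (x (Suc j)))
       \<and> (\<forall>k. ereal (\<Sum>j\<le>k. \<alpha> j / 2 * (norm (g j + (- (1 / \<alpha> j) *\<^sub>R (x (Suc j) - x j) - g j)))\<^sup>2)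
              \<le> ereal (F (x 0)) + h (x 0) - ereal f_inf
                 + ereal ((\<Sum>j\<le>k. (2 - q) * \<delta> j powr (2 / (2 - q))) / (2 * \<rho> powr (q / (2 - q)))))"
proof -
  have dom: "x k \<in> edom h" for k
    using x0 iter by (cases k) (auto simp: prox_set_def)
  define H where "H k = real_of_ereal (h (x k))" for k
  have hH: "h (x k) = ereal (H k)" for k
    using dom[of k] h_proper unfolding H_def edom_def proper_fun_def by (cases "h (x k)") auto
  define p where "p j = - (1 / \<alpha> j) *\<^sub>R (x (Suc j) - x j) - g j" for j
  have peq: "p j = (1 / \<alpha> j) *\<^sub>R ((x j - \<alpha> j *\<^sub>R g j) - x (Suc j))" for j
    using step[rule_format, of j] by (simp add: p_def algebra_simps)
  have sub: "p j \<in> subdiff h (x (Suc j))" for j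
    unfolding peq using step iter by (intro prox_subgrad[OF h_proper h_convex]) auto
  define C where "C j = (2 - q) * \<delta> j powr (2 / (2 - q)) / (2 * \<rho> powr (q / (2 - q)))" for j
  define \<Phi> where "\<Phi> k = F (x k) + H k" for k
  have desc: "\<alpha> j / 2 * (norm (g j + p j))\<^sup>2 \<le> \<Phi> j - \<Phi> (Suc j) + C j" for j
  proof -
    define d where "d = x (Suc j) - x j"
    define n where "n = norm d"
    define a where "a = \<alpha> j"
    have a: "0 < a" "a \<le> 1 / (L j + q * \<rho>)" using step by (auto simp: a_def)
    have qr: "0 \<le> q * \<rho>" using q rho by simp
    have aL: "a * (L j + q * \<rho>) \<le> 1" using a Lpos[rule_format, of j] qr
      by (simp add: field_simps)
    have gp: "g j + p j = - (1 / a) *\<^sub>R d" by (simp add: p_def a_def d_def)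
    have lhs: "\<alpha> j / 2 * (norm (g j + p j))\<^sup>2 = n\<^sup>2 / (2 * a)"
      using a unfolding gp n_def a_def[symmetric] by (simp add: power2_eq_square field_simps)
    have "h (x (Suc j)) + ereal (p j \<bullet> (x j - x (Suc j))) \<le> h (x j)"
      using sub[of j] by (simp add: subdiff_def)
    then have s1: "H (Suc j) + p j \<bullet> (x j - x (Suc j)) \<le> H j" by (simp add: hH)
    have "p j \<bullet> (x j - x (Suc j)) = n\<^sup>2 / a + g j \<bullet> d"
    proof -
      have e1: "x j - x (Suc j) = - d" by (simp add: d_def)
      have e2: "p j = - (1/a) *\<^sub>R d - g j" by (simp add: p_def a_def d_def)
      show ?thesis unfolding e1 e2 n_def power2_norm_eq_inner
        by (simp add: inner_diff_left inner_diff_right inner_commute)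
    qed
    with s1 have s1': "H (Suc j) + n\<^sup>2 / a + g j \<bullet> d \<le> H j" by simp
    have s2: "F (x (Suc j)) - (F (x j) + g j \<bullet> d) \<le> L j / 2 * n\<^sup>2 + \<delta> j * n powr q"
      using inexact_orc dom[of "Suc j"] by (simp add: d_def n_def)
    have s3: "\<delta> j * n powr q \<le> q * \<rho> / 2 * n\<^sup>2 + C j"
      unfolding C_def using young_all[OF q rho, of "\<delta> j" n] delta by (simp add: n_def)
    have s4: "(L j + q * \<rho>) * n\<^sup>2 \<le> n\<^sup>2 / a"
    proof -
      have "(a * (L j + q * \<rho>)) * n\<^sup>2 \<le> 1 * n\<^sup>2" by (rule mult_right_mono[OF aL]) simp
      then show ?thesis using a by (simp add: field_simps)
    qed
    have "n\<^sup>2 / (2 * a) \<le> \<Phi> j - \<Phi> (Suc j) + C j"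
      using s1' s2 s3 s4 unfolding \<Phi>_def by (simp add: field_simps)
    then show ?thesis using lhs by simp
  qed
  have tel: "(\<Sum>j\<le>k. \<alpha> j / 2 * (norm (g j + p j))\<^sup>2) \<le> \<Phi> 0 - \<Phi> (Suc k) + (\<Sum>j\<le>k. C j)" for k
  proof (induction k)
    case 0 then show ?case using desc[of 0] by simp
  next
    case (Suc k) then show ?case using desc[of "Suc k"] by simp
  qed
  have low: "\<Phi> k \<ge> f_inf" for k
  proof -
    have "ereal f_inf \<le> ereal (F (x k)) + h (x k)" using f_lower dom[of k] by blast
    then show ?thesis by (simp add: \<Phi>_def hH)
  qed
  show ?thesis
  proof (intro conjI allI)
    fix j show "- (1 / \<alpha> j) *\<^sub>R (x (Suc j) - x j) - g j \<in> subdiff h (x (Suc j))"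
      using sub[of j] by (simp add: p_def)
  next
    fix k
    have "(\<Sum>j\<le>k. \<alpha> j / 2 * (norm (g j + p j))\<^sup>2) \<le> F (x 0) + H 0 - f_inf + (\<Sum>j\<le>k. C j)"
      using tel[of k] low[of "Suc k"] by (simp add: \<Phi>_def)
    moreover have "(\<Sum>j\<le>k. C j) = (\<Sum>j\<le>k. (2 - q) * \<delta> j powr (2 / (2 - q))) / (2 * \<rho> powr (q / (2 - q)))"
      by (simp add: C_def sum_divide_distrib)
    ultimately show "ereal (\<Sum>j\<le>k. \<alpha> j / 2 * (norm (g j + (- (1 / \<alpha> j) *\<^sub>R (x (Suc j) - x j) - g j)))\<^sup>2)
              \<le> ereal (F (x 0)) + h (x 0) - ereal f_inf
                 + ereal ((\<Sum>j\<le>k. (2 - q) * \<delta> j powr (2 / (2 - q))) / (2 * \<rho> powr (q / (2 - q))))"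
      by (simp add: hH p_def)
  qed
qed
end
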